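(* Let $s$ be a positive integer and let $f_1,f_2,f_3\colon[s]^2\to\mathbb{Z}$ be strongly monotone functions. Define $f\colon[s]^3\to\mathbb{Z}^3$ by $f(x,y,z)=\bigl(f_1(x,y),f_2(x,z),f_3(y,z)\bigr)$. Then $f$ takes at least $s^2/6$ distinct values on $[s]^3$.
   Context: $[s]=\{1,\dots,s\}$. A function $g$ of two variables is strongly monotone if $g(x,y)\leq g(x',y)$, $g(x,y)\leq g(x,y')$ and $g(x,y)<g(x',y')$ whenever $x<x'$ and $y<y'$. *)

theory Defs
  imports Complex_Main
begin

definition strongly_monotone_on :: "nat \<Rightarrow> (nat \<Rightarrow> nat \<Rightarrow> int) \<Rightarrow> bool" where
  "strongly_monotone_on s g \<longleftrightarrow>
     (\<forall>x\<in>{1..s}. \<forall>x'\<in>{1..s}. \<forall>y\<in>{1..s}. \<forall>y'\<in>{1..s}.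
        (x < x' \<longrightarrow> g x y \<le> g x' y) \<and>
        (y < y' \<longrightarrow> g x y \<le> g x y') \<and>
        (x < x' \<and> y < y' \<longrightarrow> g x y < g x' y'))"

end

theory Submission
  imports Defs
begin

lemma fiber_bound:
  fixes F :: "(nat \<times> nat \<times> nat) set"
  assumes sub: "F \<subseteq> {1..s} \<times> {1..s} \<times> {1..s}"
    and P: "\<And>x y z x' y' z'. (x,y,z) \<in> F \<Longrightarrow> (x',y',z') \<in> F \<Longrightarrow>
              \<not>(x<x' \<and> y<y') \<and> \<not>(x<x' \<and> z<z') \<and> \<not>(y<y' \<and> z<z')"
  shows "card F \<le> 4*s+1"
proof -
  define low where "low = (\<lambda>(x::nat,y::nat,z::nat). \<forall>z'<z. (x,y,z') \<notin> F)"
  define h where "h = (\<lambda>(x::nat,y::nat,z::nat). if low (x,y,z) then int x - int y else int x - int z + 2 * int s)"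
  have inj: "inj_on h F"
  proof (rule inj_onI)
    fix p q assume p: "p \<in> F" and q: "q \<in> F" and e: "h p = h q"
    obtain x y z where pd: "p = (x,y,z)" by (cases p) auto
    obtain x' y' z' where qd: "q = (x',y',z')" by (cases q) auto
    have b: "x \<in> {1..s}" "y \<in> {1..s}" "z \<in> {1..s}" "x' \<in> {1..s}" "y' \<in> {1..s}" "z' \<in> {1..s}"
      using sub p q pd qd by auto
    have P1: "\<not>(x<x' \<and> y<y') \<and> \<not>(x<x' \<and> z<z') \<and> \<not>(y<y' \<and> z<z')"
      using P p q pd qd by blast
    have P2: "\<not>(x'<x \<and> y'<y) \<and> \<not>(x'<x \<and> z'<z) \<and> \<not>(y'<y \<and> z'<z)"
      using P p q pd qd by blast
    show "p = q"
    proof (cases "low (x,y,z)")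
      case lp: True
      show ?thesis
      proof (cases "low (x',y',z')")
        case lq: True
        have "int x - int y = int x' - int y'" using e lp lq pd qd h_def by simp
        with P1 P2 have xy: "x = x'" "y = y'" by linarith+
        have "\<not> z < z'" using lq p pd xy low_def by auto
        moreover have "\<not> z' < z" using lp q qd xy low_def by auto
        ultimately show ?thesis using pd qd xy by simp
      next
        case lq: False
        have "int x - int y = int x' - int z' + 2 * int s" using e lp lq pd qd h_def by simp
        moreover have "x \<le> s" "1 \<le> y" "1 \<le> x'" "z' \<le> s" using b by auto
        ultimately show ?thesis by linarith
      qed
    next
      case lp: False
      show ?thesis
      proof (cases "low (x',y',z')")
        case lq: True
        have "int x - int z + 2 * int s = int x' - int y'" using e lp lq pd qd h_def by simp
        moreover have "z \<le> s" "1 \<le> x" "1 \<le> y'" "x' \<le> s" using b by auto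
        ultimately show ?thesis by linarith
      next
        case lq: False
        have "int x - int z = int x' - int z'" using e lp lq pd qd h_def by simp
        with P1 P2 have xz: "x = x'" "z = z'" by linarith+
        obtain z0 where z0: "z0 < z" "(x,y,z0) \<in> F" using lp low_def by auto
        obtain z1 where z1: "z1 < z'" "(x',y',z1) \<in> F" using lq low_def by auto
        have "\<not> y < y'" using P[OF z0(2) q[unfolded qd]] z0 xz by auto
        moreover have "\<not> y' < y" using P[OF z1(2) p[unfolded pd]] z1 xz by auto
        ultimately show ?thesis using pd qd xz by simp
      qed
    qed
  qed
  have img: "h ` F \<subseteq> {- int s .. 3 * int s}"
  proof
    fix v assume "v \<in> h ` F"
    then obtain x y z where "(x,y,z) \<in> F" "v = h (x,y,z)" by auto
    moreover then have "x \<in> {1..s}" "y \<in> {1..s}" "z \<in> {1..s}" using sub by auto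
    ultimately show "v \<in> {- int s .. 3 * int s}" unfolding h_def by auto
  qed
  have "card F = card (h ` F)" using inj by (simp add: card_image)
  also have "\<dots> \<le> card {- int s .. 3 * int s}" by (rule card_mono[OF _ img]) simp
  also have "\<dots> = 4*s+1" by simp
  finally show ?thesis .
qed

theorem lemma24:
  fixes s :: nat and f1 f2 f3 :: "nat \<Rightarrow> nat \<Rightarrow> int"
  assumes "s \<ge> 1"
    and "strongly_monotone_on s f1"
    and "strongly_monotone_on s f2"
    and "strongly_monotone_on s f3"
  shows "real (card ((\<lambda>(x, y, z). (f1 x y, f2 x z, f3 y z)) ` ({1..s} \<times> {1..s} \<times> {1..s})))
           \<ge> real s ^ 2 / 6"
proof -
  define A where "A = {1..s} \<times> {1..s} \<times> {1..s}"
  define f where "f = (\<lambda>(x, y, z). (f1 x y, f2 x z, f3 y z))"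
  define I where "I = f ` A"
  have fin: "finite A" unfolding A_def by simp
  have fib: "card {a\<in>A. f a = v} \<le> 4*s+1" for v
  proof (rule fiber_bound)
    show "{a\<in>A. f a = v} \<subseteq> {1..s} \<times> {1..s} \<times> {1..s}" unfolding A_def by auto
  next
    fix x y z x' y' z'
    assume p: "(x,y,z) \<in> {a\<in>A. f a = v}" and q: "(x',y',z') \<in> {a\<in>A. f a = v}"
    have b: "x \<in> {1..s}" "y \<in> {1..s}" "z \<in> {1..s}" "x' \<in> {1..s}" "y' \<in> {1..s}" "z' \<in> {1..s}"
      using p q A_def by auto
    have e: "f1 x y = f1 x' y'" "f2 x z = f2 x' z'" "f3 y z = f3 y' z'"
      using p q f_def by auto
    have m1: "x<x' \<and> y<y' \<Longrightarrow> f1 x y < f1 x' y'"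
      using assms(2) b unfolding strongly_monotone_on_def by blast
    have m2: "x<x' \<and> z<z' \<Longrightarrow> f2 x z < f2 x' z'"
      using assms(3) b unfolding strongly_monotone_on_def by blast
    have m3: "y<y' \<and> z<z' \<Longrightarrow> f3 y z < f3 y' z'"
      using assms(4) b unfolding strongly_monotone_on_def by blast
    show "\<not>(x<x' \<and> y<y') \<and> \<not>(x<x' \<and> z<z') \<and> \<not>(y<y' \<and> z<z')"
      using e m1 m2 m3 by auto
  qed
  have eqA: "A = (\<Union>v\<in>I. {a\<in>A. f a = v})" unfolding I_def by auto
  have "card (\<Union>v\<in>I. {a\<in>A. f a = v}) \<le> (\<Sum>v\<in>I. card {a\<in>A. f a = v})"
    by (rule card_UN_le) (simp add: I_def fin)
  hence "card A \<le> (\<Sum>v\<in>I. card {a\<in>A. f a = v})" using eqA by simp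
  also have "\<dots> \<le> card I * (4*s+1)" using sum_bounded_above[of I "\<lambda>v. card {a\<in>A. f a = v}" "4*s+1"] fib by simp
  finally have c: "s^3 \<le> card I * (4*s+1)" unfolding A_def by (simp add: power3_eq_cube)
  have "real s ^ 3 \<le> real (card I) * (4 * real s + 1)"
  proof -
    have "real (s^3) \<le> real (card I * (4*s+1))" using c by (simp only: of_nat_le_iff)
    thus ?thesis by (simp add: algebra_simps)
  qed
  also have "\<dots> \<le> real (card I) * (6 * real s)" using assms(1)
    by (intro mult_left_mono) auto
  finally have "real s * real s ^ 2 \<le> real s * (6 * real (card I))"
    by (simp add: power3_eq_cube power2_eq_square algebra_simps)
  hence "real s ^ 2 \<le> 6 * real (card I)" using assms(1) by (simp add: mult_le_cancel_left)
  thus ?thesis unfolding I_def f_def A_def by simp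
qed

end
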